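(* Let $K$ be a field, $V$ a $K$-vector space, and $(V_x)_{x\in E}$ a family of subspaces of $V$ indexed by a finite set $E$, representing the polymatroid $(E,f)$ with $f(S)=\dim\big(\sum_{x\in S}V_x\big)$. Let $W_1,W_2,W_3$ be three pairwise distinct one-dimensional subspaces of $K^2$ (a linear representation of $U_{2,3}$). Define $g$ on subsets of $E\times\{1,2,3\}$ by $g(S)=\dim\big(\sum_{(x,i)\in S}V_x\otimes W_i\big)$, the sum taken inside $V\otimes_K K^2$. Then $(E\times\{1,2,3\},g)$ is a tensor product of $(E,f)$ and $U_{2,3}$, and for all $A_1,A_2,A_3\subseteq E$, writing $U_i=\sum_{x\in A_i}V_x$, \[ g\big((A_1\times\{1\})\cup(A_2\times\{2\})\cup(A_3\times\{3\})\big)=f(A_1)+f(A_2)+f(A_3)-\dim(U_1\cap U_2\cap U_3). \]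
   Context: A polymatroid $(E,f)$ consists of a finite ground set $E$ and a function $f\colon 2^E\to\mathbb{R}$ with $f(\emptyset)=0$ that is monotone and submodular. The uniform matroid $U_{2,3}$ is the polymatroid on $\{1,2,3\}$ with rank function $r(T)=\min\{|T|,2\}$. A tensor product of polymatroids $(E_1,f_1)$ and $(E_2,f_2)$ is a polymatroid $(E_1\times E_2,g)$ such that $g(S\times T)=f_1(S)f_2(T)$ for all $S\subseteq E_1$, $T\subseteq E_2$. *)

theory Defs
  imports "HOL-Analysis.Analysis" "HOL-Library.Product_Plus"
begin

definition polymatroid :: "'a set \<Rightarrow> ('a set \<Rightarrow> real) \<Rightarrow> bool" where
  "polymatroid E f \<longleftrightarrow> finite E \<and> f {} = 0 \<and>
     (\<forall>S T. S \<subseteq> T \<and> T \<subseteq> E \<longrightarrow> f S \<le> f T) \<and>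
     (\<forall>S T. S \<subseteq> E \<and> T \<subseteq> E \<longrightarrow> f (S \<union> T) + f (S \<inter> T) \<le> f S + f T)"

definition is_tensor_product ::
  "'a set \<Rightarrow> ('a set \<Rightarrow> real) \<Rightarrow> 'b set \<Rightarrow> ('b set \<Rightarrow> real) \<Rightarrow> (('a \<times> 'b) set \<Rightarrow> real) \<Rightarrow> bool" where
  "is_tensor_product E1 f1 E2 f2 g \<longleftrightarrow> polymatroid (E1 \<times> E2) g \<and>
     (\<forall>S T. S \<subseteq> E1 \<and> T \<subseteq> E2 \<longrightarrow> g (S \<times> T) = f1 S * f2 T)"

definition U23_rank :: "nat set \<Rightarrow> real" where
  "U23_rank T = real (min (card T) 2)"

text \<open>We identify V \<otimes>_K K^2 with V \<times> V via v \<otimes> (a,b) \<mapsto> (a v, b v).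
  The scalar multiplication on pairs is componentwise.\<close>

definition pair_scale :: "('k \<Rightarrow> 'v \<Rightarrow> 'v) \<Rightarrow> 'k \<Rightarrow> 'v \<times> 'v \<Rightarrow> 'v \<times> 'v" where
  "pair_scale s c p = (s c (fst p), s c (snd p))"

abbreviation K2_scale :: "'k::field \<Rightarrow> 'k \<times> 'k \<Rightarrow> 'k \<times> 'k" where
  "K2_scale \<equiv> pair_scale (*)"

text \<open>Image of the subspace U \<otimes> W in V \<otimes> K^2 = V \<times> V: span of pure tensors u \<otimes> w.\<close>
definition tensor_sub ::
  "('k::field \<Rightarrow> 'v::ab_group_add \<Rightarrow> 'v) \<Rightarrow> 'v set \<Rightarrow> ('k \<times> 'k) set \<Rightarrow> ('v \<times> 'v) set" where
  "tensor_sub s U W = module.span (pair_scale s)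
      {(s (fst w) u, s (snd w) u) | u w. u \<in> U \<and> w \<in> W}"

end

theory Submission
  imports Defs
begin


context vector_space begin

lemma fd_basis:
  assumes "finite F" "X \<subseteq> span F"
  obtains B where "B \<subseteq> X" "independent B" "X \<subseteq> span B" "card B = dim X" "finite B"
proof -
  obtain B where B: "B \<subseteq> X" "independent B" "X \<subseteq> span B" "card B = dim X"
    using basis_exists by blast
  have "finite B" using independent_span_bound[OF assms(1) B(2)] B(1) assms(2) by blast
  with B that show ?thesis by blast
qed

lemma dim_mono_fd:
  assumes "X \<subseteq> Y" "finite F" "Y \<subseteq> span F"
  shows "dim X \<le> dim Y"
proof -
  obtain C where C: "C \<subseteq> Y" "independent C" "Y \<subseteq> span C" "card C = dim Y" "finite C"
    using fd_basis[OF assms(2,3)] by blast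
  have "dim X \<le> card C" using dim_le_card[of X C] C assms(1) by blast
  with C show ?thesis by simp
qed

lemma span_Int_indep:
  assumes "independent (B \<union> C)" "B \<inter> C = {}" "v \<in> span B" "v \<in> span C"
  shows "v = 0"
proof -
  have r1: "representation (B \<union> C) v = representation B v"
    by (rule representation_extend[OF assms(1) assms(3)]) auto
  have r2: "representation (B \<union> C) v = representation C v"
    by (rule representation_extend[OF assms(1) assms(4)]) auto
  have z: "representation (B \<union> C) v b = 0" for b
    using r1 r2 representation_ne_zero[of B v b] representation_ne_zero[of C v b] assms(2)
    by (metis disjoint_iff)
  have vin: "v \<in> span (B \<union> C)" using assms(3) span_mono[of B "B \<union> C"] by blast
  show ?thesis using sum_nonzero_representation_eq[OF assms(1) vin] z by simp
qed

lemma indep_Un: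
  assumes "independent B" "independent C" "span B \<inter> span C \<subseteq> {0}"
  shows "independent (B \<union> C)"
proof
  assume "dependent (B \<union> C)"
  then obtain a where a: "a \<in> B \<union> C" "a \<in> span ((B \<union> C) - {a})"
    unfolding dependent_def by blast
  have 0: "0 \<notin> B" "0 \<notin> C" using assms(1,2) dependent_zero by blast+
  show False
  proof (cases "a \<in> B")
    case True
    have "(B \<union> C) - {a} = (B - {a}) \<union> (C - {a})" by blast
    with a(2) obtain x y where xy: "a = x + y" "x \<in> span (B - {a})" "y \<in> span (C - {a})"
      using span_Un by auto
    have "y \<in> span C" using xy(3) span_mono[of "C - {a}" C] by blast
    moreover have "y = a - x" using xy(1) by (simp add: algebra_simps)
    moreover have "a - x \<in> span B" using True xy(2) span_mono[of "B - {a}" B]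
      by (meson Diff_subset span_base span_diff subsetD)
    ultimately have "y = 0" using assms(3) by auto
    then have "a \<in> span (B - {a})" using xy by simp
    then show False using assms(1) True dependent_def by blast
  next
    case False
    then have aC: "a \<in> C" using a(1) by blast
    have "(B \<union> C) - {a} = (B - {a}) \<union> (C - {a})" by blast
    with a(2) obtain x y where xy: "a = x + y" "x \<in> span (B - {a})" "y \<in> span (C - {a})"
      using span_Un by auto
    have "x \<in> span B" using xy(2) span_mono[of "B - {a}" B] by blast
    moreover have "x = a - y" using xy(1) by (simp add: algebra_simps)
    moreover have "a - y \<in> span C" using aC xy(3) span_mono[of "C - {a}" C]
      by (meson Diff_subset span_base span_diff subsetD)
    ultimately have "x = 0" using assms(3) by auto
    then have "a \<in> span (C - {a})" using xy by simp
    then show False using assms(2) aC dependent_def by blast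
  qed
qed


lemma dim_sum_Int:
  assumes X: "subspace X" and Y: "subspace Y" and F: "finite F" "X \<subseteq> span F"
    and G: "finite G" "Y \<subseteq> span G"
  shows "dim (span (X \<union> Y)) + dim (X \<inter> Y) = dim X + dim Y"
proof -
  obtain B where B: "B \<subseteq> X \<inter> Y" "independent B" "X \<inter> Y \<subseteq> span B" "card B = dim (X \<inter> Y)" "finite B"
    using fd_basis[of F "X \<inter> Y"] F by blast
  obtain B1 where B1: "B \<subseteq> B1" "B1 \<subseteq> X" "independent B1" "X \<subseteq> span B1"
    using maximal_independent_subset_extend[of B X] B by blast
  obtain B2 where B2: "B \<subseteq> B2" "B2 \<subseteq> Y" "independent B2" "Y \<subseteq> span B2"
    using maximal_independent_subset_extend[of B Y] B by blast
  have fB1: "finite B1" using independent_span_bound[OF F(1) B1(3)] B1(2) F(2) by blast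
  have fB2: "finite B2" using independent_span_bound[OF G(1) B2(3)] B2(2) G(2) by blast
  have cB1: "card B1 = dim X" using basis_card_eq_dim B1 by blast
  have cB2: "card B2 = dim Y" using basis_card_eq_dim B2 by blast
  define C where "C = B1 - B"
  have BC: "B \<union> C = B1" "B \<inter> C = {}" using B1(1) by (auto simp: C_def)
  have cC: "card B1 = card B + card C"
    using BC fB1 by (metis card_Un_disjoint finite_Un)
  have iC: "independent C" using independent_mono[OF B1(3)] by (auto simp: C_def)
  have spX: "span B1 \<subseteq> X" using span_minimal[OF B1(2) X] .
  have spY: "span B2 \<subseteq> Y" using span_minimal[OF B2(2) Y] .
  have int0: "span C \<inter> span B2 \<subseteq> {0}"
  proof
    fix v assume v: "v \<in> span C \<inter> span B2"
    have "v \<in> X" using v spX span_mono[of C B1] by (auto simp: C_def)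
    moreover have "v \<in> Y" using v spY by auto
    ultimately have "v \<in> span B" using B(3) by auto
    then have "v = 0" using span_Int_indep[of B C v] BC B1(3) v by auto
    then show "v \<in> {0}" by simp
  qed
  have iCB2: "independent (C \<union> B2)" using indep_Un[OF iC B2(3) int0] .
  have dCB2: "C \<inter> B2 = {}"
  proof (rule ccontr)
    assume "C \<inter> B2 \<noteq> {}"
    then obtain c where "c \<in> C" "c \<in> B2" by blast
    then have "c = 0" using int0 span_base[of c C] span_base[of c B2] by blast
    then show False using \<open>c \<in> C\<close> iC dependent_zero by blast
  qed
  have fC: "finite C" using fB1 by (simp add: C_def)
  have sp: "span (X \<union> Y) = span (C \<union> B2)"
  proof -
    have "B1 \<subseteq> span (C \<union> B2)"
    proof
      fix b assume "b \<in> B1"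
      then have "b \<in> B \<or> b \<in> C" by (auto simp: C_def)
      then show "b \<in> span (C \<union> B2)"
      proof
        assume "b \<in> B"
        then have "b \<in> span B2" using B(1) B2(4) by blast
        then show ?thesis using span_mono[of B2 "C \<union> B2"] by blast
      next
        assume "b \<in> C" then show ?thesis by (simp add: span_base)
      qed
    qed
    then have "span B1 \<subseteq> span (C \<union> B2)" using span_minimal by blast
    then have "X \<subseteq> span (C \<union> B2)" using B1(4) by blast
    moreover have "Y \<subseteq> span (C \<union> B2)" using B2(4) span_mono[of B2 "C \<union> B2"] by blast
    moreover have "C \<union> B2 \<subseteq> X \<union> Y" using B1(2) B2(2) by (auto simp: C_def)
    ultimately show ?thesis
      by (metis le_sup_iff span_eq span_superset subset_trans)
  qed
  have "dim (span (X \<union> Y)) = card C + card B2"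
    using sp dim_span_eq_card_independent[OF iCB2] card_Un_disjoint[OF fC fB2 dCB2] by simp
  then show ?thesis using cB1 cB2 cC B(4) by simp
qed

lemma dim_image_inj:
  assumes "vector_space s2" "module_hom scale s2 h" "inj h" "subspace U"
  shows "vector_space.dim s2 (h ` U) = dim U"
proof -
  interpret v2: vector_space s2 by (rule assms(1))
  interpret hm: module_hom scale s2 h by (rule assms(2))
  obtain B where B: "B \<subseteq> U" "independent B" "U \<subseteq> span B" "card B = dim U"
    using basis_exists by blast
  have U: "span B = U" using span_subspace[OF B(1,3) assms(4)] .
  have i: "v2.independent (h ` B)"
    using hm.independent_injective_image[OF B(2)] assms(3) inj_on_subset by blast
  have "h ` U = v2.span (h ` B)" using hm.span_image U by simp
  then have "v2.dim (h ` U) = card (h ` B)" using v2.dim_span_eq_card_independent[OF i] by simp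
  also have "\<dots> = card B" using card_image[of h B] assms(3) inj_on_subset by blast
  finally show ?thesis using B(4) by simp
qed

end

definition phi :: "('k::field \<Rightarrow> 'v::ab_group_add \<Rightarrow> 'v) \<Rightarrow> 'k \<Rightarrow> 'k \<Rightarrow> 'v \<Rightarrow> 'v \<times> 'v" where
  "phi s a b u = (s a u, s b u)"

lemma vsP: assumes "vector_space s" shows "vector_space (pair_scale s)"
proof -
  interpret vector_space s by (rule assms)
  show ?thesis
    by unfold_locales (auto simp: pair_scale_def scale_right_distrib scale_left_distrib)
qed

lemma vsK: "vector_space (K2_scale :: 'k::field \<Rightarrow> _)"
  by unfold_locales (auto simp: pair_scale_def algebra_simps)

lemma phi_hom: assumes "vector_space s" shows "module_hom s (pair_scale s) (phi s a b)"
proof -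
  interpret vector_space s by (rule assms)
  interpret P: vector_space "pair_scale s" by (rule vsP[OF assms])
  show ?thesis
    by (unfold_locales) (auto simp: phi_def pair_scale_def scale_right_distrib mult.commute)
qed

lemma phi_key:
  assumes "vector_space s" "a1 * b2 \<noteq> a2 * b1" "phi s a1 b1 x = phi s a2 b2 y"
  shows "x = 0 \<and> y = 0"
proof -
  interpret vector_space s by (rule assms(1))
  have e: "s a1 x = s a2 y" "s b1 x = s b2 y" using assms(3) by (auto simp: phi_def)
  have "s b2 (s a1 x) = s a2 (s b2 y)" using e(1) by (simp add: mult.commute)
  also have "\<dots> = s a2 (s b1 x)" using e(2) by simp
  finally have "s (b2 * a1) x = s (a2 * b1) x" by simp
  then have x: "x = 0" using assms(2) by (auto simp: mult.commute)
  have "s a2 y = 0" "s b2 y = 0" using e x by auto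
  then have "y = 0" using assms(2) by auto
  with x show ?thesis by simp
qed

lemma phi_inj:
  assumes "vector_space s" "(a, b) \<noteq> (0, 0)"
  shows "inj (phi s a b)"
proof (rule injI)
  interpret vector_space s by (rule assms(1))
  fix x y assume "phi s a b x = phi s a b y"
  then have "s a x = s a y" "s b x = s b y" by (auto simp: phi_def)
  then show "x = y" using assms(2) by auto
qed

lemma phi_comb:
  assumes "vector_space s" "a3 = al * a1 + be * a2" "b3 = al * b1 + be * b2"
  shows "phi s a3 b3 u = phi s a1 b1 (s al u) + phi s a2 b2 (s be u)"
proof -
  interpret vector_space s by (rule assms(1))
  show ?thesis using assms(2,3) by (simp add: phi_def scale_left_distrib mult.commute)
qed

lemma dim_zero: assumes "vector_space s" shows "vector_space.dim s {0} = 0"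
proof -
  interpret vector_space s by (rule assms(1))
  have "dim {0} = dim {}" by (metis dim_span span_empty)
  then show ?thesis using dim_eq_card_independent[of "{}"] independent_empty by simp
qed


lemma (in vector_space) span_Un_span_left: "span (span A \<union> B) = span (A \<union> B)"
  by (simp add: span_Un span_span)

lemma triple:
  assumes vs: "vector_space s"
    and U: "module.subspace s U1" "module.subspace s U2" "module.subspace s U3"
    and F: "finite F1" "finite F2" "finite F3"
      "U1 \<subseteq> module.span s F1" "U2 \<subseteq> module.span s F2" "U3 \<subseteq> module.span s F3"
    and d: "a1 * b2 \<noteq> a2 * b1" "a1 * b3 \<noteq> a3 * b1" "a2 * b3 \<noteq> a3 * b2"
  shows "vector_space.dim (pair_scale s) (module.span (pair_scale s)
      (phi s a1 b1 ` U1 \<union> phi s a2 b2 ` U2 \<union> phi s a3 b3 ` U3)) + vector_space.dim s (U1 \<inter> U2 \<inter> U3)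
    = vector_space.dim s U1 + vector_space.dim s U2 + vector_space.dim s U3"
proof -
  interpret V: vector_space s by (rule vs)
  interpret P: vector_space "pair_scale s" by (rule vsP[OF vs])
  interpret h1: module_hom s "pair_scale s" "phi s a1 b1" by (rule phi_hom[OF vs])
  interpret h2: module_hom s "pair_scale s" "phi s a2 b2" by (rule phi_hom[OF vs])
  interpret h3: module_hom s "pair_scale s" "phi s a3 b3" by (rule phi_hom[OF vs])
  let ?p1 = "phi s a1 b1" and ?p2 = "phi s a2 b2" and ?p3 = "phi s a3 b3"
  have nz: "(a1, b1) \<noteq> (0, 0)" "(a2, b2) \<noteq> (0, 0)" "(a3, b3) \<noteq> (0, 0)" using d by auto
  define R1 where "R1 = ?p1 ` U1"
  define R2 where "R2 = ?p2 ` U2"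
  define R3 where "R3 = ?p3 ` U3"
  have sR: "P.subspace R1" "P.subspace R2" "P.subspace R3"
    unfolding R1_def R2_def R3_def
    using h1.subspace_image[OF U(1)] h2.subspace_image[OF U(2)] h3.subspace_image[OF U(3)] by auto
  have fdR: "R1 \<subseteq> P.span (?p1 ` F1)" "R2 \<subseteq> P.span (?p2 ` F2)" "R3 \<subseteq> P.span (?p3 ` F3)"
    unfolding R1_def R2_def R3_def h1.span_image h2.span_image h3.span_image using F by auto
  have dR: "P.dim R1 = V.dim U1" "P.dim R2 = V.dim U2" "P.dim R3 = V.dim U3"
    unfolding R1_def R2_def R3_def
    using V.dim_image_inj[OF vsP[OF vs] phi_hom[OF vs] phi_inj[OF vs] ] U nz by auto
  define Q where "Q = P.span (R1 \<union> R2)"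
  have sQ: "P.subspace Q" unfolding Q_def by simp
  have fdQ: "Q \<subseteq> P.span (?p1 ` F1 \<union> ?p2 ` F2)"
  proof -
    have "R1 \<union> R2 \<subseteq> P.span (?p1 ` F1 \<union> ?p2 ` F2)"
      using fdR P.span_mono[of "?p1 ` F1" "?p1 ` F1 \<union> ?p2 ` F2"]
        P.span_mono[of "?p2 ` F2" "?p1 ` F1 \<union> ?p2 ` F2"] by blast
    then show ?thesis unfolding Q_def using P.span_minimal by blast
  qed
  have R12: "R1 \<inter> R2 = {0}"
  proof
    show "R1 \<inter> R2 \<subseteq> {0}"
    proof
      fix p assume "p \<in> R1 \<inter> R2"
      then obtain u1 u2 where "p = ?p1 u1" "p = ?p2 u2" unfolding R1_def R2_def by blast
      then have "u1 = 0" using phi_key[OF vs d(1)] by metis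
      then show "p \<in> {0}" using \<open>p = ?p1 u1\<close> by simp
    qed
    show "{0} \<subseteq> R1 \<inter> R2" using sR P.subspace_0 by auto
  qed
  have e1: "P.dim Q + P.dim (R1 \<inter> R2) = P.dim R1 + P.dim R2"
    unfolding Q_def using P.dim_sum_Int[OF sR(1) sR(2) _ fdR(1) _ fdR(2)] F by auto
  have e1': "P.dim Q = V.dim U1 + V.dim U2" using e1 R12 dim_zero[OF vsP[OF vs]] dR by simp
  have e2: "P.dim (P.span (Q \<union> R3)) + P.dim (Q \<inter> R3) = P.dim Q + P.dim R3"
    using P.dim_sum_Int[OF sQ sR(3) _ fdQ _ fdR(3)] F by auto
  have spEq: "P.span (R1 \<union> R2 \<union> R3) = P.span (Q \<union> R3)"
    unfolding Q_def by (simp add: P.span_Un_span_left)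
  define al where "al = (a3 * b2 - a2 * b3) / (a1 * b2 - a2 * b1)"
  define be where "be = (a1 * b3 - a3 * b1) / (a1 * b2 - a2 * b1)"
  have det: "a1 * b2 - a2 * b1 \<noteq> 0" using d(1) by simp
  have al0: "al \<noteq> 0" using d(3) det by (auto simp: al_def)
  have be0: "be \<noteq> 0" using d(2) det by (auto simp: be_def)
  have a3: "a3 = al * a1 + be * a2"
  proof -
    have "al * a1 + be * a2 = ((a3*b2 - a2*b3)*a1 + (a1*b3 - a3*b1)*a2) / (a1*b2 - a2*b1)"
      unfolding al_def be_def by (simp add: add_divide_distrib)
    also have "(a3*b2 - a2*b3)*a1 + (a1*b3 - a3*b1)*a2 = a3 * (a1*b2 - a2*b1)"
      by (simp add: algebra_simps)
    finally show ?thesis using det by simp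
  qed
  have b3: "b3 = al * b1 + be * b2"
  proof -
    have "al * b1 + be * b2 = ((a3*b2 - a2*b3)*b1 + (a1*b3 - a3*b1)*b2) / (a1*b2 - a2*b1)"
      unfolding al_def be_def by (simp add: add_divide_distrib)
    also have "(a3*b2 - a2*b3)*b1 + (a1*b3 - a3*b1)*b2 = b3 * (a1*b2 - a2*b1)"
      by (simp add: algebra_simps)
    finally show ?thesis using det by simp
  qed
  have comb: "?p3 u = ?p1 (s al u) + ?p2 (s be u)" for u using phi_comb[OF vs a3 b3] .
  have Qeq: "Q = {x + y | x y. x \<in> R1 \<and> y \<in> R2}"
  proof -
    have "P.span R1 = R1" "P.span R2 = R2" using sR P.span_eq_iff by auto
    then show ?thesis unfolding Q_def P.span_Un by (simp only:)
  qed
  have QR: "Q \<inter> R3 = ?p3 ` (U1 \<inter> U2 \<inter> U3)"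
  proof
    show "Q \<inter> R3 \<subseteq> ?p3 ` (U1 \<inter> U2 \<inter> U3)"
    proof
      fix p assume p: "p \<in> Q \<inter> R3"
      then obtain u1 u2 where u12: "u1 \<in> U1" "u2 \<in> U2" "p = ?p1 u1 + ?p2 u2"
        unfolding Qeq R1_def R2_def by blast
      from p obtain u3 where u3: "u3 \<in> U3" "p = ?p3 u3" unfolding R3_def by blast
      have eq: "?p1 u1 + ?p2 u2 = ?p1 (s al u3) + ?p2 (s be u3)" using u12 u3 comb by simp
      have "?p1 u1 - ?p1 (s al u3) = ?p2 (s be u3) - ?p2 u2"
        using eq by (simp add: algebra_simps)
      then have "?p1 (u1 - s al u3) = ?p2 (s be u3 - u2)" by (simp add: h1.diff h2.diff)
      then have z: "u1 - s al u3 = 0" "s be u3 - u2 = 0" using phi_key[OF vs d(1)] by blast+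
      have "u3 = s (1 / al) u1" using z(1) al0 by simp
      then have "u3 \<in> U1" using V.subspace_scale[OF U(1) u12(1)] by simp
      moreover have "u3 = s (1 / be) u2"
      proof -
        have "u2 = s be u3" using z(2) by simp
        then show ?thesis using be0 by simp
      qed
      then have "u3 \<in> U2" using V.subspace_scale[OF U(2) u12(2)] by simp
      ultimately show "p \<in> ?p3 ` (U1 \<inter> U2 \<inter> U3)" using u3 by blast
    qed
    show "?p3 ` (U1 \<inter> U2 \<inter> U3) \<subseteq> Q \<inter> R3"
    proof
      fix p assume "p \<in> ?p3 ` (U1 \<inter> U2 \<inter> U3)"
      then obtain u where u: "u \<in> U1" "u \<in> U2" "u \<in> U3" "p = ?p3 u" by blast
      have "s al u \<in> U1" "s be u \<in> U2" using V.subspace_scale U u by auto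
      then have "p \<in> Q" unfolding Qeq R1_def R2_def using comb u(4) by blast
      moreover have "p \<in> R3" unfolding R3_def using u by blast
      ultimately show "p \<in> Q \<inter> R3" by blast
    qed
  qed
  have dQR: "P.dim (Q \<inter> R3) = V.dim (U1 \<inter> U2 \<inter> U3)"
    unfolding QR using V.dim_image_inj[OF vsP[OF vs] phi_hom[OF vs] phi_inj[OF vs nz(3)]]
      V.subspace_inter U by auto
  show ?thesis
    using e2 e1' dQR dR spEq unfolding R1_def R2_def R3_def by simp
qed


lemma col_scal:
  fixes a b a' b' :: "'k::field"
  assumes "(a, b) \<noteq> (0, 0)" "(a', b') \<noteq> (0, 0)" "a * b' = a' * b"
  shows "\<exists>k. k \<noteq> 0 \<and> a' = k * a \<and> b' = k * b"
proof (cases "a = 0")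
  case False
  have "b' = (a' / a) * b" using assms(3) False by (simp add: field_simps)
  moreover have "a' / a \<noteq> 0"
  proof
    assume "a' / a = 0"
    then have "a' = 0" using False by simp
    then have "b' = 0" using assms(3) False by simp
    then show False using assms(2) \<open>a' = 0\<close> by simp
  qed
  ultimately show ?thesis using False by (intro exI[of _ "a' / a"]) auto
next
  case True
  then have b: "b \<noteq> 0" using assms(1) by simp
  then have a': "a' = 0" using assms(3) True by simp
  then have "b' \<noteq> 0" using assms(2) by simp
  then show ?thesis using True a' b by (intro exI[of _ "b' / b"]) auto
qed

lemma col_range:
  fixes a b a' b' :: "'k::field"
  assumes "(a, b) \<noteq> (0, 0)" "(a', b') \<noteq> (0, 0)" "a * b' = a' * b"
  shows "range (\<lambda>c. K2_scale c (a, b)) = range (\<lambda>c. K2_scale c (a', b'))"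
proof -
  obtain k where k: "k \<noteq> 0" "a' = k * a" "b' = k * b" using col_scal[OF assms] by blast
  show ?thesis
  proof
    show "range (\<lambda>c. K2_scale c (a, b)) \<subseteq> range (\<lambda>c. K2_scale c (a', b'))"
    proof
      fix p assume "p \<in> range (\<lambda>c. K2_scale c (a, b))"
      then obtain c where "p = K2_scale c (a, b)" by blast
      then have "p = K2_scale (c / k) (a', b')" using k by (simp add: pair_scale_def)
      then show "p \<in> range (\<lambda>c. K2_scale c (a', b'))" by blast
    qed
    show "range (\<lambda>c. K2_scale c (a', b')) \<subseteq> range (\<lambda>c. K2_scale c (a, b))"
    proof
      fix p assume "p \<in> range (\<lambda>c. K2_scale c (a', b'))"
      then obtain c where "p = K2_scale c (a', b')" by blast
      then have "p = K2_scale (c * k) (a, b)" using k by (simp add: pair_scale_def)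
      then show "p \<in> range (\<lambda>c. K2_scale c (a, b))" by blast
    qed
  qed
qed

lemma W_rep:
  fixes W :: "('k::field \<times> 'k) set"
  assumes "module.subspace K2_scale W" "vector_space.dim K2_scale W = 1"
  shows "\<exists>w. w \<noteq> 0 \<and> W = range (\<lambda>c. K2_scale c w)"
proof -
  interpret K: vector_space "K2_scale :: 'k \<Rightarrow> _" by (rule vsK)
  obtain B where B: "B \<subseteq> W" "K.independent B" "W \<subseteq> K.span B" "card B = K.dim W"
    using K.basis_exists by blast
  then obtain w where w: "B = {w}" using assms(2) card_1_singletonE by metis
  have "w \<noteq> 0" using B(2) w K.dependent_zero by blast
  moreover have "W = K.span {w}" using K.span_subspace[OF B(1) B(3) assms(1)] w by simp
  ultimately show ?thesis using K.span_singleton by blast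
qed

lemma tensor_sub_eq:
  assumes vs: "vector_space s" and U: "module.subspace s U"
    and W: "W = range (\<lambda>c. K2_scale c (a, b))"
  shows "tensor_sub s U W = phi s a b ` U"
proof -
  interpret V: vector_space s by (rule vs)
  interpret P: vector_space "pair_scale s" by (rule vsP[OF vs])
  interpret h: module_hom s "pair_scale s" "phi s a b" by (rule phi_hom[OF vs])
  have G: "{(s (fst w) u, s (snd w) u) | u w. u \<in> U \<and> w \<in> W} = phi s a b ` U"
  proof
    show "{(s (fst w) u, s (snd w) u) | u w. u \<in> U \<and> w \<in> W} \<subseteq> phi s a b ` U"
    proof
      fix p assume "p \<in> {(s (fst w) u, s (snd w) u) | u w. u \<in> U \<and> w \<in> W}"
      then obtain u c where uc: "u \<in> U" "p = (s (c * a) u, s (c * b) u)"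
        using W by (auto simp: pair_scale_def)
      then have "p = phi s a b (s c u)" by (simp add: phi_def mult.commute)
      moreover have "s c u \<in> U" using V.subspace_scale[OF U uc(1)] .
      ultimately show "p \<in> phi s a b ` U" by blast
    qed
    show "phi s a b ` U \<subseteq> {(s (fst w) u, s (snd w) u) | u w. u \<in> U \<and> w \<in> W}"
    proof
      fix p assume "p \<in> phi s a b ` U"
      then obtain u where u: "u \<in> U" "p = phi s a b u" by blast
      have "(a, b) \<in> W" using W by (auto simp: pair_scale_def intro: range_eqI[of _ _ 1])
      then show "p \<in> {(s (fst w) u, s (snd w) u) | u w. u \<in> U \<and> w \<in> W}"
        using u by (auto simp: phi_def)
    qed
  qed
  have "tensor_sub s U W = P.span (phi s a b ` U)" unfolding tensor_sub_def G ..
  also have "\<dots> = phi s a b ` V.span U" using h.span_image .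
  also have "V.span U = U" using U V.span_eq_iff by blast
  finally show ?thesis .
qed

lemma (in vector_space) span_Un3: "span (span A \<union> span B \<union> span C) = span (A \<union> B \<union> C)"
proof -
  have "A \<union> B \<union> C \<subseteq> span (span A \<union> span B \<union> span C)"
    using span_superset[of "span A \<union> span B \<union> span C"] span_superset[of A] span_superset[of B]
      span_superset[of C] by blast
  moreover have "span A \<union> span B \<union> span C \<subseteq> span (A \<union> B \<union> C)"
    using span_mono[of A "A \<union> B \<union> C"] span_mono[of B "A \<union> B \<union> C"] span_mono[of C "A \<union> B \<union> C"]
    by blast
  ultimately show ?thesis using span_eq by blast
qed

theorem proposition4p1:
  fixes scale :: "'k::field \<Rightarrow> 'v::ab_group_add \<Rightarrow> 'v"
    and E :: "'e set"
    and Vs :: "'e \<Rightarrow> 'v set"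
    and W :: "nat \<Rightarrow> ('k \<times> 'k) set"
    and f :: "'e set \<Rightarrow> real"
    and g :: "('e \<times> nat) set \<Rightarrow> real"
  assumes vs: "vector_space scale"
    and finE: "finite E"
    and sub: "\<And>x. x \<in> E \<Longrightarrow> module.subspace scale (Vs x)"
    and fdim: "\<And>x. x \<in> E \<Longrightarrow> \<exists>B. finite B \<and> module.span scale B = Vs x"
    and f_def: "\<And>S. f S = real (vector_space.dim scale (module.span scale (\<Union>x\<in>S. Vs x)))"
    and Wsub: "\<And>i. i \<in> {1,2,3} \<Longrightarrow> module.subspace K2_scale (W i)"
    and Wdim: "\<And>i. i \<in> {1,2,3} \<Longrightarrow> vector_space.dim K2_scale (W i) = 1"
    and Wdist: "W 1 \<noteq> W 2" "W 1 \<noteq> W 3" "W 2 \<noteq> W 3"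
    and g_def: "\<And>S. g S = real (vector_space.dim (pair_scale scale)
                   (module.span (pair_scale scale) (\<Union>(x, i)\<in>S. tensor_sub scale (Vs x) (W i))))"
  shows "is_tensor_product E f {1,2,3} U23_rank g \<and>
    (\<forall>A1 A2 A3. A1 \<subseteq> E \<and> A2 \<subseteq> E \<and> A3 \<subseteq> E \<longrightarrow>
       g ((A1 \<times> {1}) \<union> (A2 \<times> {2}) \<union> (A3 \<times> {3})) =
         f A1 + f A2 + f A3 -
         real (vector_space.dim scale
           (module.span scale (\<Union>x\<in>A1. Vs x) \<inter> module.span scale (\<Union>x\<in>A2. Vs x)
              \<inter> module.span scale (\<Union>x\<in>A3. Vs x))))"
proof -
  interpret V: vector_space scale by (rule vs)
  interpret P: vector_space "pair_scale scale" by (rule vsP[OF vs])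
  have ex: "\<forall>i\<in>{1,2,3::nat}. \<exists>w. w \<noteq> 0 \<and> W i = range (\<lambda>c. K2_scale c w)"
  proof
    fix i :: nat assume i: "i \<in> {1,2,3}"
    show "\<exists>w. w \<noteq> 0 \<and> W i = range (\<lambda>c. K2_scale c w)" by (rule W_rep[OF Wsub[OF i] Wdim[OF i]])
  qed
  from bchoice[OF ex] obtain wf where wf0: "\<forall>i\<in>{1,2,3::nat}. wf i \<noteq> 0 \<and> W i = range (\<lambda>c. K2_scale c (wf i))"
    by (elim exE)
  have wf: "wf i \<noteq> 0 \<and> W i = range (\<lambda>c. K2_scale c (wf i))" if "i \<in> {1,2,3}" for i
    by (rule bspec[OF wf0 that])
  define a where "a i = fst (wf i)" for i
  define b where "b i = snd (wf i)" for i
  have wab: "(a i, b i) \<noteq> (0, 0) \<and> W i = range (\<lambda>c. K2_scale c (a i, b i))" if "i \<in> {1,2,3}" for i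
  proof -
    have "(a i, b i) = wf i" by (simp add: a_def b_def)
    moreover have "(0::'k, 0::'k) = 0" by (simp add: zero_prod_def)
    ultimately show ?thesis using wf[OF that] by metis
  qed
  have noncol: "a i * b j \<noteq> a j * b i" if "i \<in> {1,2,3}" "j \<in> {1,2,3}" "W i \<noteq> W j" for i j
    using col_range[of "a i" "b i" "a j" "b j"] wab[OF that(1)] wab[OF that(2)] that(3) by metis
  have d: "a 1 * b 2 \<noteq> a 2 * b 1" "a 1 * b 3 \<noteq> a 3 * b 1" "a 2 * b 3 \<noteq> a 3 * b 2"
    using noncol Wdist by auto
  define ph where "ph i = phi scale (a i) (b i)" for i
  have Tq: "tensor_sub scale (Vs x) (W i) = ph i ` Vs x" if "x \<in> E" "i \<in> {1,2,3}" for x i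
    using tensor_sub_eq[OF vs sub[OF that(1)]] wab[OF that(2)] unfolding ph_def by blast
  obtain Bs where Bs: "\<And>x. x \<in> E \<Longrightarrow> finite (Bs x) \<and> V.span (Bs x) = Vs x" using fdim by metis
  have phspan: "ph i ` V.span X = P.span (ph i ` X)" for i X
    unfolding ph_def using module_hom.span_image[OF phi_hom[OF vs]] by metis
  define F where "F = (\<Union>(x, i)\<in>E \<times> {1,2,3}. ph i ` Bs x)"
  have finF: "finite F" unfolding F_def using finE Bs by auto
  define G where "G S = P.span (\<Union>(x, i)\<in>S. tensor_sub scale (Vs x) (W i))" for S
  have gG: "g S = real (P.dim (G S))" for S using g_def G_def by simp
  have GF: "G S \<subseteq> P.span F" if "S \<subseteq> E \<times> {1,2,3}" for S
  proof -
    have "(\<Union>(x, i)\<in>S. tensor_sub scale (Vs x) (W i)) \<subseteq> P.span F"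
    proof (clarsimp)
      fix x i y assume xi: "(x, i) \<in> S" and y: "y \<in> tensor_sub scale (Vs x) (W i)"
      have xE: "x \<in> E" "i \<in> {1,2,3}" using xi that by auto
      have "tensor_sub scale (Vs x) (W i) = P.span (ph i ` Bs x)"
        using Tq[OF xE] Bs[OF xE(1)] phspan by metis
      moreover have "ph i ` Bs x \<subseteq> F" unfolding F_def using xE by blast
      ultimately show "y \<in> P.span F" using y P.span_mono by blast
    qed
    then show ?thesis unfolding G_def using P.span_minimal by blast
  qed
  have spUn2: "P.span (P.span A \<union> P.span B) = P.span (A \<union> B)" for A B
    by (metis P.span_Un_span_left sup_commute)
  have poly: "polymatroid (E \<times> {1,2,3}) g"
    unfolding polymatroid_def
  proof (intro conjI allI impI)
    show "finite (E \<times> {1,2,3::nat})" using finE by simp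
    show "g {} = 0" unfolding gG G_def using dim_zero[OF vsP[OF vs]] by simp
  next
    fix S T assume ST: "S \<subseteq> T \<and> T \<subseteq> E \<times> {1,2,3::nat}"
    have "G S \<subseteq> G T" unfolding G_def using ST by (intro P.span_mono) blast
    then show "g S \<le> g T" unfolding gG using P.dim_mono_fd[OF _ finF GF] ST by simp
  next
    fix S T :: "('e \<times> nat) set" assume ST: "S \<subseteq> E \<times> {1,2,3} \<and> T \<subseteq> E \<times> {1,2,3}"
    have u: "G (S \<union> T) = P.span (G S \<union> G T)" unfolding G_def spUn2 by (simp add: UN_Un)
    have i: "G (S \<inter> T) \<subseteq> G S \<inter> G T" unfolding G_def
      by (intro Int_greatest P.span_mono) blast+
    have e: "P.dim (P.span (G S \<union> G T)) + P.dim (G S \<inter> G T) = P.dim (G S) + P.dim (G T)"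
      using P.dim_sum_Int[OF _ _ finF GF finF GF] ST unfolding G_def by simp
    have m: "P.dim (G (S \<inter> T)) \<le> P.dim (G S \<inter> G T)"
      using P.dim_mono_fd[OF i finF] GF ST by blast
    show "g (S \<union> T) + g (S \<inter> T) \<le> g S + g T"
      unfolding gG using e m u by simp
  qed
  have tri: "P.dim (G ((A1 \<times> {1}) \<union> (A2 \<times> {2}) \<union> (A3 \<times> {3}))) +
         V.dim (V.span (\<Union>x\<in>A1. Vs x) \<inter> V.span (\<Union>x\<in>A2. Vs x) \<inter> V.span (\<Union>x\<in>A3. Vs x)) =
       V.dim (V.span (\<Union>x\<in>A1. Vs x)) + V.dim (V.span (\<Union>x\<in>A2. Vs x)) + V.dim (V.span (\<Union>x\<in>A3. Vs x))"
    if A: "A1 \<subseteq> E" "A2 \<subseteq> E" "A3 \<subseteq> E" for A1 A2 A3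
  proof -
    have un: "(\<Union>(x, i)\<in>(A1 \<times> {1}) \<union> (A2 \<times> {2}) \<union> (A3 \<times> {3}). tensor_sub scale (Vs x) (W i)) =
      ph 1 ` (\<Union>x\<in>A1. Vs x) \<union> ph 2 ` (\<Union>x\<in>A2. Vs x) \<union> ph 3 ` (\<Union>x\<in>A3. Vs x)"
    proof -
      have t1: "tensor_sub scale (Vs x) (W 1) = ph 1 ` Vs x" if "x \<in> A1" for x using Tq A that by blast
      have t2: "tensor_sub scale (Vs x) (W 2) = ph 2 ` Vs x" if "x \<in> A2" for x using Tq A that by blast
      have t3: "tensor_sub scale (Vs x) (W 3) = ph 3 ` Vs x" if "x \<in> A3" for x using Tq A that by blast
      have g: "(\<Union>(x, i)\<in>(A1 \<times> {1}) \<union> (A2 \<times> {2}) \<union> (A3 \<times> {3::nat}). tensor_sub scale (Vs x) (W i)) =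
        (\<Union>x\<in>A1. tensor_sub scale (Vs x) (W 1)) \<union> (\<Union>x\<in>A2. tensor_sub scale (Vs x) (W 2))
        \<union> (\<Union>x\<in>A3. tensor_sub scale (Vs x) (W 3))" by blast
      have h1: "(\<Union>x\<in>A1. tensor_sub scale (Vs x) (W 1)) = ph 1 ` (\<Union>x\<in>A1. Vs x)"
        unfolding image_UN using t1 by (rule SUP_cong[OF refl])
      have h2: "(\<Union>x\<in>A2. tensor_sub scale (Vs x) (W 2)) = ph 2 ` (\<Union>x\<in>A2. Vs x)"
        unfolding image_UN using t2 by (rule SUP_cong[OF refl])
      have h3: "(\<Union>x\<in>A3. tensor_sub scale (Vs x) (W 3)) = ph 3 ` (\<Union>x\<in>A3. Vs x)"
        unfolding image_UN using t3 by (rule SUP_cong[OF refl])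
      show ?thesis unfolding g h1 h2 h3 ..
    qed
    have GS: "G ((A1 \<times> {1}) \<union> (A2 \<times> {2}) \<union> (A3 \<times> {3})) =
      P.span (ph 1 ` V.span (\<Union>x\<in>A1. Vs x) \<union> ph 2 ` V.span (\<Union>x\<in>A2. Vs x) \<union> ph 3 ` V.span (\<Union>x\<in>A3. Vs x))"
      unfolding G_def un phspan P.span_Un3 ..
    have fin: "finite (\<Union>x\<in>Aj. Bs x)" if "Aj \<subseteq> E" for Aj
      using that finE Bs by (meson finite_UN_I finite_subset subsetD)
    have sub': "V.span (\<Union>x\<in>Aj. Vs x) \<subseteq> V.span (\<Union>x\<in>Aj. Bs x)" if "Aj \<subseteq> E" for Aj
    proof -
      have "(\<Union>x\<in>Aj. Vs x) \<subseteq> V.span (\<Union>x\<in>Aj. Bs x)"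
      proof (clarsimp)
        fix x y assume "x \<in> Aj" "y \<in> Vs x"
        then have "y \<in> V.span (Bs x)" using Bs that by blast
        then show "y \<in> V.span (\<Union>x\<in>Aj. Bs x)" using V.span_mono[of "Bs x" "\<Union>x\<in>Aj. Bs x"] \<open>x \<in> Aj\<close> by blast
      qed
      then show ?thesis using V.span_minimal by blast
    qed
    show ?thesis unfolding GS ph_def
      by (rule triple[OF vs V.subspace_span V.subspace_span V.subspace_span fin[OF A(1)] fin[OF A(2)]
            fin[OF A(3)] sub'[OF A(1)] sub'[OF A(2)] sub'[OF A(3)] d])
  qed
  have part2: "\<forall>A1 A2 A3. A1 \<subseteq> E \<and> A2 \<subseteq> E \<and> A3 \<subseteq> E \<longrightarrow>
       g ((A1 \<times> {1}) \<union> (A2 \<times> {2}) \<union> (A3 \<times> {3})) =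
         f A1 + f A2 + f A3 -
         real (vector_space.dim scale
           (module.span scale (\<Union>x\<in>A1. Vs x) \<inter> module.span scale (\<Union>x\<in>A2. Vs x)
              \<inter> module.span scale (\<Union>x\<in>A3. Vs x)))"
  proof (intro allI impI)
    fix A1 A2 A3 assume A: "A1 \<subseteq> E \<and> A2 \<subseteq> E \<and> A3 \<subseteq> E"
    have e: "real (P.dim (G ((A1 \<times> {1}) \<union> (A2 \<times> {2}) \<union> (A3 \<times> {3})))) +
         real (V.dim (V.span (\<Union>x\<in>A1. Vs x) \<inter> V.span (\<Union>x\<in>A2. Vs x) \<inter> V.span (\<Union>x\<in>A3. Vs x))) =
       real (V.dim (V.span (\<Union>x\<in>A1. Vs x))) + real (V.dim (V.span (\<Union>x\<in>A2. Vs x))) + real (V.dim (V.span (\<Union>x\<in>A3. Vs x)))"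
      using arg_cong[where f=real, OF tri] A by simp
    show "g ((A1 \<times> {1}) \<union> (A2 \<times> {2}) \<union> (A3 \<times> {3})) =
         f A1 + f A2 + f A3 -
         real (vector_space.dim scale
           (module.span scale (\<Union>x\<in>A1. Vs x) \<inter> module.span scale (\<Union>x\<in>A2. Vs x)
              \<inter> module.span scale (\<Union>x\<in>A3. Vs x)))"
      unfolding gG f_def using e by linarith
  qed
  have Z: "V.span (\<Union>x\<in>{}. Vs x) = {0}" by simp
  have DZ: "V.dim {0} = 0" using dim_zero[OF vs] .
  have part1: "g (S \<times> T) = f S * U23_rank T" if ST: "S \<subseteq> E" "T \<subseteq> {1,2,3}" for S T
  proof -
    define A where "A i = (if i \<in> T then S else {})" for i :: nat
    have eq: "S \<times> T = (A 1 \<times> {1}) \<union> (A 2 \<times> {2}) \<union> (A 3 \<times> {3})"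
      using ST(2) unfolding A_def by auto
    have AE: "A 1 \<subseteq> E" "A 2 \<subseteq> E" "A 3 \<subseteq> E" using ST(1) unfolding A_def by auto
    have h: "g (S \<times> T) = f (A 1) + f (A 2) + f (A 3) -
         real (V.dim (V.span (\<Union>x\<in>A 1. Vs x) \<inter> V.span (\<Union>x\<in>A 2. Vs x) \<inter> V.span (\<Union>x\<in>A 3. Vs x)))"
      unfolding eq using part2 AE by blast
    have fA: "f (A i) = (if i \<in> T then f S else 0)" for i
      using DZ V.dim_eq_card_independent[of "{}"] V.independent_empty by (simp add: A_def f_def)
    have spA: "V.span (\<Union>x\<in>A i. Vs x) = (if i \<in> T then V.span (\<Union>x\<in>S. Vs x) else {0})" for i
      by (simp add: A_def)
    show ?thesis
    proof (cases "1 \<in> T"; cases "2 \<in> T"; cases "3 \<in> T")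
      assume "1 \<in> T" "2 \<in> T" "3 \<in> T"
      then have "T = {1,2,3}" using ST(2) by auto
      then show ?thesis using h fA[of 1] fA[of 2] fA[of 3] spA[of 1] spA[of 2] spA[of 3] DZ V.span_zero
        by (simp add: U23_rank_def f_def)
    next
      assume "1 \<in> T" "2 \<in> T" "3 \<notin> T"
      then have "T = {1,2}" using ST(2) by auto
      then show ?thesis using h fA[of 1] fA[of 2] fA[of 3] spA[of 1] spA[of 2] spA[of 3] DZ V.span_zero
        by (simp add: U23_rank_def f_def)
    next
      assume "1 \<in> T" "2 \<notin> T" "3 \<in> T"
      then have "T = {1,3}" using ST(2) by auto
      then show ?thesis using h fA[of 1] fA[of 2] fA[of 3] spA[of 1] spA[of 2] spA[of 3] DZ V.span_zero
        by (simp add: U23_rank_def f_def)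
    next
      assume "1 \<in> T" "2 \<notin> T" "3 \<notin> T"
      then have "T = {1}" using ST(2) by auto
      then show ?thesis using h fA[of 1] fA[of 2] fA[of 3] spA[of 1] spA[of 2] spA[of 3] DZ V.span_zero
        by (simp add: U23_rank_def f_def)
    next
      assume "1 \<notin> T" "2 \<in> T" "3 \<in> T"
      then have "T = {2,3}" using ST(2) by auto
      then show ?thesis using h fA[of 1] fA[of 2] fA[of 3] spA[of 1] spA[of 2] spA[of 3] DZ V.span_zero
        by (simp add: U23_rank_def f_def)
    next
      assume "1 \<notin> T" "2 \<in> T" "3 \<notin> T"
      then have "T = {2}" using ST(2) by auto
      then show ?thesis using h fA[of 1] fA[of 2] fA[of 3] spA[of 1] spA[of 2] spA[of 3] DZ V.span_zero
        by (simp add: U23_rank_def f_def)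
    next
      assume "1 \<notin> T" "2 \<notin> T" "3 \<in> T"
      then have "T = {3}" using ST(2) by auto
      then show ?thesis using h fA[of 1] fA[of 2] fA[of 3] spA[of 1] spA[of 2] spA[of 3] DZ V.span_zero
        by (simp add: U23_rank_def f_def)
    next
      assume "1 \<notin> T" "2 \<notin> T" "3 \<notin> T"
      then have "T = {}" using ST(2) by auto
      then show ?thesis using h fA[of 1] fA[of 2] fA[of 3] spA[of 1] spA[of 2] spA[of 3] DZ V.span_zero
        by (simp add: U23_rank_def f_def)
    qed
  qed
  show ?thesis
    using poly part1 part2 unfolding is_tensor_product_def by blast
qed

end
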